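(* Let $\gamma$ be an ordinal of $\mathrm{OT}$, $\perp\!\!\!\perp$ any pole, and $\beta<\gamma$. For every $\mathcal L_{\mathrm R}^{<\beta}$-sentence $A$ and every number $a$: (1) $\langle{\perp\!\!\!\perp},<\gamma\rangle\models a\,F_\beta\,\ulcorner A\urcorner$ if and only if $\langle{\perp\!\!\!\perp},<\gamma\rangle\models a\in\|A\|$; (2) $\langle{\perp\!\!\!\perp},<\gamma\rangle\models a\,T_\beta\,\ulcorner A\urcorner$ if and only if $\langle{\perp\!\!\!\perp},<\gamma\rangle\models a\in|A|$.
   Context: $\mathcal{L}$ is the language of $\mathsf{PA}$ ($\to,\forall,=$, constant $0$, function symbols for all primitive recursive functions); $\langle x,y\rangle$ primitive recursive pairing with projections $(\cdot)_0,(\cdot)_1$; $e\cdot m\simeq n$: the $e$-th partial recursive function on $m$ halts with output $n$. Fixed Gödel numbering. $\mathrm{OT}$ is a standard notation system for predicative ordinals. $\mathcal L_{\mathrm R}^{<\gamma}$ is $\mathcal L$ plus unary $x\in{\perp\!\!\!\perp}$ and binary $x\,F_\beta\,y$, $x\,T_\beta\,y$ for $\beta<\gamma$; $\mathcal L_{\perp\!\!\!\perp}=\mathcal L\cup\{\in{\perp\!\!\!\perp}\}$; $\mathrm{Sent}^{<\beta}_{\mathrm R}$ is the set of codes of $\mathcal L_{\mathrm R}^{<\beta}$-sentences. Explicit refutation/realisation formulas, by recursion on $A$: $s\in\|P\|:=P\to s\in{\perp\!\!\!\perp}$ ($P$ atomic of $\mathcal L_{\perp\!\!\!\perp}$); $s\in\|t\,F_\beta\,u\|:=s\,F_\beta\,(t\,\dot\in\|u\|)$;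 $s\in\|t\,T_\beta\,u\|:=s\,F_\beta\,(t\,\dot\in|u|)$; $s\in\|A\to B\|:=(s)_0\in|A|\wedge(s)_1\in\|B\|$; $s\in\|\forall xA(x)\|:=(s)_1\in\|A((s)_0)\|$; $s\in|A|:=\forall a(a\in\|A\|\to\langle s,a\rangle\in{\perp\!\!\!\perp})$; here $x\,\dot\in\|y\|$, $x\,\dot\in|y|$ are primitive recursive function symbols with $x\,\dot\in\|\ulcorner A\urcorner\|=\ulcorner\dot x\in\|A\|\urcorner$ and $x\,\dot\in|\ulcorner A\urcorner|=\ulcorner\dot x\in|A|\urcorner$ ($\dot x$: numeral of $x$) for sentences $A$, returning non-sentence codes when $y$ is not a sentence code. A pole is $\perp\!\!\!\perp\subseteq\mathbb N$ with ($e\cdot m\simeq n$ and $n\in\perp\!\!\!\perp$) $\Rightarrow\langle e,m\rangle\in\perp\!\!\!\perp$. For $\mathcal L_{\mathrm R}^{<\gamma}$-sentences define $\|A\|^{<\gamma}_{\perp\!\!\!\perp}\subseteq\mathbb N$ inductively: $n\in\|s=t\|$ iff ($s=t$ true in $\mathbb N$ implies $n\in\perp\!\!\!\perp$); $n\in\|m\in{\perp\!\!\!\perp}\|$ iff ($m\in\perp\!\!\!\perp$ implies $n\in\perp\!\!\!\perp$); $n\in\|m\,F_\beta\,l\|$ iff $l=\ulcorner A\urcorner$ for some $\mathcal L_{\mathrm R}^{<\beta}$-sentence $A$ and $n\in\|\bar m\in\|A\|\|$; $n\in\|m\,T_\beta\,l\|$ iff $l=\ulcorner A\urcorner$ for some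 $\mathcal L_{\mathrm R}^{<\beta}$-sentence $A$ and $n\in\|\bar m\in|A|\|$; $\|A\to B\|=\{n:(n)_0\in|A|,(n)_1\in\|B\|\}$; $\|\forall xA\|=\{n:(n)_1\in\|A(\overline{(n)_0})\|\}$; $|A|^{<\gamma}_{\perp\!\!\!\perp}=\{n:\forall m\in\|A\|\ \langle n,m\rangle\in\perp\!\!\!\perp\}$. Let $\mathbb F^\beta=\{(n,\ulcorner A\urcorner):A\in\mathrm{Sent}^{<\beta}_{\mathrm R},n\in\|A\|^{<\gamma}_{\perp\!\!\!\perp}\}$, $\mathbb T^\beta=\{(n,\ulcorner A\urcorner):A\in\mathrm{Sent}^{<\beta}_{\mathrm R},n\in|A|^{<\gamma}_{\perp\!\!\!\perp}\}$. $\langle{\perp\!\!\!\perp},<\gamma\rangle$ denotes the $\mathcal L_{\mathrm R}^{<\gamma}$-structure $\langle\mathbb N,\perp\!\!\!\perp,(\mathbb F^\beta)_{\beta<\gamma},(\mathbb T^\beta)_{\beta<\gamma}\rangle$. *)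

theory Defs
  imports Main "HOL-Library.Countable" "HOL-Library.Nat_Bijection"
begin

definition pair :: "nat \<Rightarrow> nat \<Rightarrow> nat" where
  "pair x y = prod_encode (x, y)"
definition p0 :: "nat \<Rightarrow> nat" where "p0 n = fst (prod_decode n)"
definition p1 :: "nat \<Rightarrow> nat" where "p1 n = snd (prod_decode n)"

datatype recf = RZ | RS | RId nat | RCn recf "recf list" | RPr recf recf | RMn recf

instance recf :: countable by countable_datatype

inductive reval :: "recf \<Rightarrow> nat list \<Rightarrow> nat \<Rightarrow> bool" where
  "reval RZ xs 0"
| "reval RS (x # xs) (Suc x)"
| "i < length xs \<Longrightarrow> reval (RId i) xs (xs ! i)"
| "length ys = length gs \<Longrightarrow> (\<forall>i < length gs. reval (gs ! i) xs (ys ! i))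
     \<Longrightarrow> reval f ys y \<Longrightarrow> reval (RCn f gs) xs y"
| "reval f xs y \<Longrightarrow> reval (RPr f g) (0 # xs) y"
| "reval (RPr f g) (n # xs) y \<Longrightarrow> reval g (y # n # xs) z \<Longrightarrow> reval (RPr f g) (Suc n # xs) z"
| "reval f (n # xs) 0 \<Longrightarrow> (\<forall>k < n. \<exists>v. v \<noteq> 0 \<and> reval f (k # xs) v) \<Longrightarrow> reval (RMn f) xs n"

text \<open>Kleene application e.m ~ n, with the fixed Goedel numbering to_nat of recf.\<close>
definition kapp :: "nat \<Rightarrow> nat \<Rightarrow> nat \<Rightarrow> bool" where
  "kapp e m n \<longleftrightarrow> (\<exists>f. to_nat f = e \<and> reval f [m] n)"

definition is_pole :: "nat set \<Rightarrow> bool" where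
  "is_pole P \<longleftrightarrow> (\<forall>e m n. kapp e m n \<and> n \<in> P \<longrightarrow> pair e m \<in> P)"

datatype prfn = Zf | Sf | Pf nat | Cnf prfn "prfn list" | Prf prfn prfn

instance prfn :: countable by countable_datatype

definition arg :: "nat list \<Rightarrow> nat \<Rightarrow> nat" where
  "arg xs i = (if i < length xs then xs ! i else 0)"

fun preval :: "prfn \<Rightarrow> nat list \<Rightarrow> nat" where
  "preval Zf xs = 0"
| "preval Sf xs = Suc (arg xs 0)"
| "preval (Pf i) xs = arg xs i"
| "preval (Cnf f gs) xs = preval f (map (\<lambda>g. preval g xs) gs)"
| "preval (Prf f g) xs =
     rec_nat (preval f (tl xs)) (\<lambda>n r. preval g (r # n # tl xs)) (arg xs 0)"

section \<open>Syntax of L_R (de Bruijn indices for variables)\<close>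

datatype 'o trm = Var nat | Zero | Fn prfn "'o trm list"
  | Pr "'o trm" "'o trm" | Fst "'o trm" | Snd "'o trm"
  | DotRef "'o trm" "'o trm"
  | DotReal "'o trm" "'o trm"

datatype 'o fm = Eq "'o trm" "'o trm" | InPole "'o trm"
  | Ff 'o "'o trm" "'o trm" | Tf 'o "'o trm" "'o trm"
  | Imp "'o fm" "'o fm" | All "'o fm"

instance trm :: (countable) countable by countable_datatype
instance fm :: (countable) countable by countable_datatype

fun num :: "nat \<Rightarrow> 'o trm" where
  "num 0 = Zero"
| "num (Suc k) = Fn Sf [num k]"

fun liftt :: "nat \<Rightarrow> 'o trm \<Rightarrow> 'o trm" where
  "liftt k (Var i) = Var (if i < k then i else Suc i)"
| "liftt k Zero = Zero"
| "liftt k (Fn f ts) = Fn f (map (liftt k) ts)"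
| "liftt k (Pr t u) = Pr (liftt k t) (liftt k u)"
| "liftt k (Fst t) = Fst (liftt k t)"
| "liftt k (Snd t) = Snd (liftt k t)"
| "liftt k (DotRef t u) = DotRef (liftt k t) (liftt k u)"
| "liftt k (DotReal t u) = DotReal (liftt k t) (liftt k u)"

fun substt :: "nat \<Rightarrow> 'o trm \<Rightarrow> 'o trm \<Rightarrow> 'o trm" where
  "substt k s (Var i) = (if i < k then Var i else if i = k then s else Var (i - 1))"
| "substt k s Zero = Zero"
| "substt k s (Fn f ts) = Fn f (map (substt k s) ts)"
| "substt k s (Pr t u) = Pr (substt k s t) (substt k s u)"
| "substt k s (Fst t) = Fst (substt k s t)"
| "substt k s (Snd t) = Snd (substt k s t)"
| "substt k s (DotRef t u) = DotRef (substt k s t) (substt k s u)"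
| "substt k s (DotReal t u) = DotReal (substt k s t) (substt k s u)"

fun fvt :: "'o trm \<Rightarrow> nat set" where
  "fvt (Var i) = {i}"
| "fvt Zero = {}"
| "fvt (Fn f ts) = (\<Union>t\<in>set ts. fvt t)"
| "fvt (Pr t u) = fvt t \<union> fvt u"
| "fvt (Fst t) = fvt t"
| "fvt (Snd t) = fvt t"
| "fvt (DotRef t u) = fvt t \<union> fvt u"
| "fvt (DotReal t u) = fvt t \<union> fvt u"

fun liftf :: "nat \<Rightarrow> 'o fm \<Rightarrow> 'o fm" where
  "liftf k (Eq t u) = Eq (liftt k t) (liftt k u)"
| "liftf k (InPole t) = InPole (liftt k t)"
| "liftf k (Ff b t u) = Ff b (liftt k t) (liftt k u)"
| "liftf k (Tf b t u) = Tf b (liftt k t) (liftt k u)"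
| "liftf k (Imp A B) = Imp (liftf k A) (liftf k B)"
| "liftf k (All A) = All (liftf (Suc k) A)"

fun substf :: "nat \<Rightarrow> 'o trm \<Rightarrow> 'o fm \<Rightarrow> 'o fm" where
  "substf k s (Eq t u) = Eq (substt k s t) (substt k s u)"
| "substf k s (InPole t) = InPole (substt k s t)"
| "substf k s (Ff b t u) = Ff b (substt k s t) (substt k s u)"
| "substf k s (Tf b t u) = Tf b (substt k s t) (substt k s u)"
| "substf k s (Imp A B) = Imp (substf k s A) (substf k s B)"
| "substf k s (All A) = All (substf (Suc k) (liftt 0 s) A)"

definition inst :: "'o fm \<Rightarrow> 'o trm \<Rightarrow> 'o fm" where
  "inst A t = substf 0 t A"

fun fvf :: "'o fm \<Rightarrow> nat set" where
  "fvf (Eq t u) = fvt t \<union> fvt u"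
| "fvf (InPole t) = fvt t"
| "fvf (Ff b t u) = fvt t \<union> fvt u"
| "fvf (Tf b t u) = fvt t \<union> fvt u"
| "fvf (Imp A B) = fvf A \<union> fvf B"
| "fvf (All A) = (\<lambda>i. i - 1) ` (fvf A - {0})"

definition sentence :: "'o fm \<Rightarrow> bool" where
  "sentence A \<longleftrightarrow> fvf A = {}"

fun ords :: "'o fm \<Rightarrow> 'o set" where
  "ords (Eq t u) = {}"
| "ords (InPole t) = {}"
| "ords (Ff b t u) = {b}"
| "ords (Tf b t u) = {b}"
| "ords (Imp A B) = ords A \<union> ords B"
| "ords (All A) = ords A"

definition sent_lt :: "'o::order \<Rightarrow> 'o fm \<Rightarrow> bool" where
  "sent_lt \<beta> A \<longleftrightarrow> sentence A \<and> (\<forall>b \<in> ords A. b < \<beta>)"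

fun fsize :: "'o fm \<Rightarrow> nat" where
  "fsize (Imp A B) = Suc (fsize A + fsize B)"
| "fsize (All A) = Suc (fsize A)"
| "fsize _ = 1"

lemma fsize_substf[simp]: "fsize (substf k s A) = fsize A"
  by (induction A arbitrary: k s) auto

lemma fsize_liftf[simp]: "fsize (liftf k A) = fsize A"
  by (induction A arbitrary: k) auto

lemma fsize_pos: "0 < fsize A"
  by (cases A) auto

definition Fls :: "'o fm" where "Fls = Eq Zero (num 1)"
definition Conj :: "'o fm \<Rightarrow> 'o fm \<Rightarrow> 'o fm" where
  "Conj A B = Imp (Imp A (Imp B Fls)) Fls"

function refF :: "'o trm \<Rightarrow> 'o fm \<Rightarrow> 'o fm" and realF :: "'o trm \<Rightarrow> 'o fm \<Rightarrow> 'o fm" where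
  "refF s (Eq t u) = Imp (Eq t u) (InPole s)"
| "refF s (InPole t) = Imp (InPole t) (InPole s)"
| "refF s (Ff b t u) = Ff b s (DotRef t u)"
| "refF s (Tf b t u) = Ff b s (DotReal t u)"
| "refF s (Imp A B) = Conj (realF (Fst s) A) (refF (Snd s) B)"
| "refF s (All A) = refF (Snd s) (inst A (Fst s))"
| "realF s A = All (Imp (refF (Var 0) (liftf 0 A)) (InPole (Pr (liftt 0 s) (Var 0))))"
  by pat_completeness auto
termination
  by (relation "measure (case_sum (\<lambda>(s, A). 2 * fsize A) (\<lambda>(s, A). 2 * fsize A + 1))")
     (auto simp: inst_def)

definition code :: "'o::countable fm \<Rightarrow> nat" where
  "code A = to_nat A"

text \<open>x dot-in ||y|| and x dot-in |y|; on non-sentence codes they return the code of the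
  non-sentence  v0 = v0 .\<close>
definition dotref :: "'o::countable itself \<Rightarrow> nat \<Rightarrow> nat \<Rightarrow> nat" where
  "dotref _ x y = (if \<exists>A::'o fm. sentence A \<and> code A = y
     then code (refF (num x) (THE A::'o fm. sentence A \<and> code A = y))
     else code (Eq (Var 0) (Var 0) :: 'o fm))"

definition dotreal :: "'o::countable itself \<Rightarrow> nat \<Rightarrow> nat \<Rightarrow> nat" where
  "dotreal _ x y = (if \<exists>A::'o fm. sentence A \<and> code A = y
     then code (realF (num x) (THE A::'o fm. sentence A \<and> code A = y))
     else code (Eq (Var 0) (Var 0) :: 'o fm))"

fun teval :: "'o::countable trm \<Rightarrow> (nat \<Rightarrow> nat) \<Rightarrow> nat" where
  "teval (Var i) e = e i"
| "teval Zero e = 0"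
| "teval (Fn f ts) e = preval f (map (\<lambda>t. teval t e) ts)"
| "teval (Pr t u) e = pair (teval t e) (teval u e)"
| "teval (Fst t) e = p0 (teval t e)"
| "teval (Snd t) e = p1 (teval t e)"
| "teval (DotRef t u) e = dotref TYPE('o) (teval t e) (teval u e)"
| "teval (DotReal t u) e = dotreal TYPE('o) (teval t e) (teval u e)"

definition shift :: "nat \<Rightarrow> (nat \<Rightarrow> nat) \<Rightarrow> nat \<Rightarrow> nat" where
  "shift n e = (\<lambda>i. case i of 0 \<Rightarrow> n | Suc j \<Rightarrow> e j)"

fun sat :: "nat set \<Rightarrow> ('o \<Rightarrow> (nat \<times> nat) set) \<Rightarrow> ('o \<Rightarrow> (nat \<times> nat) set)
            \<Rightarrow> (nat \<Rightarrow> nat) \<Rightarrow> 'o::countable fm \<Rightarrow> bool" where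
  "sat P FF TT e (Eq t u) \<longleftrightarrow> teval t e = teval u e"
| "sat P FF TT e (InPole t) \<longleftrightarrow> teval t e \<in> P"
| "sat P FF TT e (Ff b t u) \<longleftrightarrow> (teval t e, teval u e) \<in> FF b"
| "sat P FF TT e (Tf b t u) \<longleftrightarrow> (teval t e, teval u e) \<in> TT b"
| "sat P FF TT e (Imp A B) \<longleftrightarrow> (sat P FF TT e A \<longrightarrow> sat P FF TT e B)"
| "sat P FF TT e (All A) \<longleftrightarrow> (\<forall>n. sat P FF TT (shift n e) A)"

text \<open>One step of the inductive definition, with the sets ||B|| needed in the clauses for
  atoms  m F_b l,  m T_b l  supplied by an oracle Orc b B (B an L_R^{<b}-sentence).
  Terms of sentences are closed, so they are evaluated in an arbitrary environment.\<close>
function rs :: "nat set \<Rightarrow> ('o \<Rightarrow> 'o fm \<Rightarrow> nat set) \<Rightarrow> 'o::{countable,order} fm \<Rightarrow> nat set" where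
  "rs P Orc (Eq t u) = {n. teval t (\<lambda>_. 0) = teval u (\<lambda>_. 0) \<longrightarrow> n \<in> P}"
| "rs P Orc (InPole t) = {n. teval t (\<lambda>_. 0) \<in> P \<longrightarrow> n \<in> P}"
| "rs P Orc (Ff b t u) = {n. \<exists>A. sent_lt b A \<and> teval u (\<lambda>_. 0) = code A
                          \<and> n \<in> Orc b (refF (num (teval t (\<lambda>_. 0))) A)}"
| "rs P Orc (Tf b t u) = {n. \<exists>A. sent_lt b A \<and> teval u (\<lambda>_. 0) = code A
                          \<and> n \<in> Orc b (realF (num (teval t (\<lambda>_. 0))) A)}"
| "rs P Orc (Imp A B) = {n. (\<forall>m \<in> rs P Orc A. pair (p0 n) m \<in> P) \<and> p1 n \<in> rs P Orc B}"
| "rs P Orc (All A) = {n. p1 n \<in> rs P Orc (inst A (num (p0 n)))}"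
  by pat_completeness auto
termination
  by (relation "measure (\<lambda>(P, Orc, A). fsize A)") (auto simp: inst_def)

text \<open>NR P beta B = ||B|| for L_R^{<beta}-sentences B, by well-founded recursion on beta.\<close>
definition NR :: "nat set \<Rightarrow> 'o::{countable,wellorder} \<Rightarrow> 'o fm \<Rightarrow> nat set" where
  "NR P = wfrec {(x, y). x < y} (\<lambda>R \<beta> A. rs P (\<lambda>\<delta> B. if \<delta> < \<beta> then R \<delta> B else {}) A)"

definition refset :: "nat set \<Rightarrow> 'o::{countable,wellorder} \<Rightarrow> 'o fm \<Rightarrow> nat set" where
  "refset P \<gamma> A = NR P \<gamma> A"

definition realset :: "nat set \<Rightarrow> 'o::{countable,wellorder} \<Rightarrow> 'o fm \<Rightarrow> nat set" where
  "realset P \<gamma> A = {n. \<forall>m \<in> refset P \<gamma> A. pair n m \<in> P}"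

definition FFset :: "nat set \<Rightarrow> 'o::{countable,wellorder} \<Rightarrow> 'o \<Rightarrow> (nat \<times> nat) set" where
  "FFset P \<gamma> \<beta> = {(n, code A) | n A. sent_lt \<beta> A \<and> n \<in> refset P \<gamma> A}"

definition TTset :: "nat set \<Rightarrow> 'o::{countable,wellorder} \<Rightarrow> 'o \<Rightarrow> (nat \<times> nat) set" where
  "TTset P \<gamma> \<beta> = {(n, code A) | n A. sent_lt \<beta> A \<and> n \<in> realset P \<gamma> A}"

text \<open><pole, <gamma> |= phi  (phi an L_R^{<gamma}-sentence; symbols F_b, T_b with b >= gamma
  do not belong to the language and are interpreted as empty).\<close>
definition models :: "nat set \<Rightarrow> 'o::{countable,wellorder} \<Rightarrow> 'o fm \<Rightarrow> bool" where
  "models P \<gamma> \<phi> = sat P (\<lambda>b. if b < \<gamma> then FFset P \<gamma> b else {})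
                          (\<lambda>b. if b < \<gamma> then TTset P \<gamma> b else {}) (\<lambda>_. 0) \<phi>"

end

theory Submission
  imports Defs
begin

definition ins :: "nat \<Rightarrow> nat \<Rightarrow> (nat \<Rightarrow> nat) \<Rightarrow> nat \<Rightarrow> nat" where
  "ins k v e = (\<lambda>i. if i < k then e i else if i = k then v else e (i - 1))"

lemma shift_0[simp]: "shift n e 0 = n"
  by (simp add: shift_def)

lemma ins0: "ins 0 v e = shift v e"
  by (auto simp: ins_def shift_def fun_eq_iff split: nat.split)

lemma ins_shift: "ins (Suc k) v (shift m e) = shift m (ins k v e)"
  by (auto simp: ins_def shift_def fun_eq_iff split: nat.split)

lemma teval_liftt: "teval (liftt k t) (ins k v e) = teval t e"
  by (induction t arbitrary: k e) (auto simp: ins_def cong: map_cong)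

lemma teval_liftt0: "teval (liftt 0 t) (shift v e) = teval t e"
  using teval_liftt[of 0 t v e] by (simp add: ins0)

lemma teval_substt: "teval (substt k s t) e = teval t (ins k (teval s e) e)"
  by (induction t arbitrary: k e) (auto simp: ins_def cong: map_cong)

lemma teval_num[simp]: "teval (num k) e = k"
  by (induction k) (auto simp: arg_def)

lemma fvt_num[simp]: "fvt (num k) = {}"
  by (induction k) auto

fun Rsem :: "nat set \<Rightarrow> ('o \<Rightarrow> (nat \<times> nat) set) \<Rightarrow> (nat \<Rightarrow> nat) \<Rightarrow> 'o::countable fm \<Rightarrow> nat set" where
  "Rsem P FF e (Eq t u) = {n. teval t e = teval u e \<longrightarrow> n \<in> P}"
| "Rsem P FF e (InPole t) = {n. teval t e \<in> P \<longrightarrow> n \<in> P}"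
| "Rsem P FF e (Ff b t u) = {n. (n, dotref TYPE('o) (teval t e) (teval u e)) \<in> FF b}"
| "Rsem P FF e (Tf b t u) = {n. (n, dotreal TYPE('o) (teval t e) (teval u e)) \<in> FF b}"
| "Rsem P FF e (Imp A B) = {n. (\<forall>m \<in> Rsem P FF e A. pair (p0 n) m \<in> P) \<and> p1 n \<in> Rsem P FF e B}"
| "Rsem P FF e (All A) = {n. p1 n \<in> Rsem P FF (shift (p0 n) e) A}"

lemma Rsem_liftf: "Rsem P FF (ins k v e) (liftf k A) = Rsem P FF e A"
proof (induction A arbitrary: k e)
  case (All A)
  then show ?case by (simp add: ins_shift[symmetric])
qed (auto simp: teval_liftt)

lemma Rsem_liftf0: "Rsem P FF (shift v e) (liftf 0 A) = Rsem P FF e A"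
  using Rsem_liftf[of P FF 0 v e A] by (simp add: ins0)

lemma Rsem_substf: "Rsem P FF e (substf k s A) = Rsem P FF (ins k (teval s e) e) A"
proof (induction A arbitrary: k e s)
  case (All A)
  then show ?case by (simp add: ins_shift teval_liftt0)
qed (auto simp: teval_substt)

lemma sat_Fls: "\<not> sat P FF TT e Fls"
  by (simp add: Fls_def arg_def)

lemma sat_Conj: "sat P FF TT e (Conj A B) \<longleftrightarrow> sat P FF TT e A \<and> sat P FF TT e B"
  by (auto simp: Conj_def sat_Fls)

lemma sat_ref:
  "(\<forall>e. sat P FF TT e (refF s A) \<longleftrightarrow> teval s e \<in> Rsem P FF e A)"
  "(\<forall>e. sat P FF TT e (realF s A) \<longleftrightarrow> (\<forall>m \<in> Rsem P FF e A. pair (teval s e) m \<in> P))"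
proof (induction s A and s A rule: refF_realF.induct)
  case (6 s A)
  then show ?case by (simp add: inst_def Rsem_substf ins0)
next
  case (7 s A)
  then show ?case by (auto simp: Rsem_liftf0 teval_liftt0)
qed (auto simp: sat_Conj)

lemma ords_substf[simp]: "ords (substf k s A) = ords A"
  by (induction A arbitrary: k s) auto

lemma ords_liftf[simp]: "ords (liftf k A) = ords A"
  by (induction A arbitrary: k) auto

lemma ords_ref: "ords (refF s A) = ords A" "ords (realF s A) = ords A"
  by (induction s A and s A rule: refF_realF.induct) (auto simp: Conj_def Fls_def inst_def)

lemma fvt_liftt: "fvt (liftt k t) = (\<lambda>i. if i < k then i else Suc i) ` fvt t"
  by (induction t arbitrary: k) (auto simp: image_Un image_UN)

lemma fvf_liftf: "fvf (liftf k A) \<subseteq> {i \<in> fvf A. i < k} \<union> Suc ` {i \<in> fvf A. k \<le> i}"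
proof (induction A arbitrary: k)
  case (All A)
  show ?case
  proof
    fix x assume "x \<in> fvf (liftf k (All A))"
    then obtain y where y: "y \<in> fvf (liftf (Suc k) A)" "y \<noteq> 0" "x = y - 1" by auto
    from y(1) All[of "Suc k"] have "(y \<in> fvf A \<and> y < Suc k) \<or> (\<exists>z. y = Suc z \<and> z \<in> fvf A \<and> Suc k \<le> z)" by blast
    then show "x \<in> {i \<in> fvf (All A). i < k} \<union> Suc ` {i \<in> fvf (All A). k \<le> i}"
    proof
      assume "y \<in> fvf A \<and> y < Suc k" then show ?thesis using y by force
    next
      assume "\<exists>z. y = Suc z \<and> z \<in> fvf A \<and> Suc k \<le> z"
      then obtain z where "y = Suc z" "z \<in> fvf A" "Suc k \<le> z" by blast
      then have "z - 1 \<in> fvf (All A)" "k \<le> z - 1" "x = Suc (z - 1)" using y by force+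
      then show ?thesis by blast
    qed
  qed
next
  case (Imp A B) then show ?case by (simp, blast)
qed (auto simp: fvt_liftt)

lemma fvt_substt: "fvt (substt k s t) \<subseteq> {i. i \<in> fvt t \<and> i < k} \<union> {i - 1 | i. i \<in> fvt t \<and> k < i} \<union> fvt s"
proof (induction t arbitrary: k)
  case (Fn f ts) then show ?case by (simp, blast)
qed (simp_all, blast+)

lemma fvf_substf: "fvf (substf k s A) \<subseteq> {i. i \<in> fvf A \<and> i < k} \<union> {i - 1 | i. i \<in> fvf A \<and> k < i} \<union> fvt s"
proof (induction A arbitrary: k s)
  case (Eq t u) then show ?case using fvt_substt[of k s t] fvt_substt[of k s u] by auto
next
  case (InPole t) then show ?case using fvt_substt[of k s t] by auto
next
  case (Ff b t u) then show ?case using fvt_substt[of k s t] fvt_substt[of k s u] by auto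
next
  case (Tf b t u) then show ?case using fvt_substt[of k s t] fvt_substt[of k s u] by auto
next
  case (Imp A B) then show ?case by fastforce
next
  case (All A)
  have "fvf (substf (Suc k) (liftt 0 s) A) \<subseteq> {i. i \<in> fvf A \<and> i < Suc k} \<union> {i - 1 | i. i \<in> fvf A \<and> Suc k < i} \<union> Suc ` fvt s"
    using All[of "Suc k" "liftt 0 s"] by (simp add: fvt_liftt)
  then show ?case by (auto simp: image_iff) (fastforce+)
qed

lemma fvf_ref: "fvf (refF s A) \<subseteq> fvf A \<union> fvt s" "fvf (realF s A) \<subseteq> fvf A \<union> fvt s"
proof (induction s A and s A rule: refF_realF.induct)
  case (6 s A)
  have "fvf (inst A (Fst s)) \<subseteq> fvf (All A) \<union> fvt s"
    using fvf_substf[of 0 "Fst s" A] by (auto simp: inst_def)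
  then show ?case using 6 by auto
next
  case (7 s A)
  then show ?case using fvf_liftf[of 0 A] by (auto simp: fvt_liftt)
qed (auto simp: Conj_def Fls_def)

lemma code_inj: "code A = code B \<longleftrightarrow> A = B"
  by (simp add: code_def)

lemma rs_cong: "(\<forall>c \<in> ords A. O1 c = O2 c) \<Longrightarrow> rs P O1 A = rs P O2 A"
proof (induction P O1 A rule: rs.induct)
  case (6 P Orc A)
  then show ?case by (simp add: inst_def)
qed auto

lemma NR_unfold: "NR P \<delta> A = rs P (\<lambda>d B. if d < \<delta> then NR P d B else {}) A"
  unfolding NR_def
  by (subst wfrec[OF wf], rule arg_cong[where f="\<lambda>Q. rs P Q A"]) (auto simp: fun_eq_iff cut_apply)

lemma NR_persist:
  assumes "\<forall>c \<in> ords B. c < b" "b < \<gamma>"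
  shows "NR P \<gamma> B = NR P b B"
  apply (subst NR_unfold, subst (2) NR_unfold)
  apply (rule rs_cong) using assms by (auto simp: fun_eq_iff)

lemma the_sent: "sentence A \<Longrightarrow> (THE B. sentence B \<and> B = A) = A"
  by (rule the_equality) auto

lemma p0_pair[simp]: "p0 (pair x y) = x"
  by (simp add: p0_def pair_def)

lemma dotref_code: "sentence A \<Longrightarrow> dotref TYPE('o) x (code A) = code (refF (num x) (A::'o::countable fm))"
  unfolding dotref_def by (auto simp: code_inj the_sent)

lemma dotreal_code: "sentence A \<Longrightarrow> dotreal TYPE('o) x (code A) = code (realF (num x) (A::'o::countable fm))"
  unfolding dotreal_def by (auto simp: code_inj the_sent)

lemma sentence_ref: "sentence A \<Longrightarrow> sentence (refF (num x) A)" "sentence A \<Longrightarrow> sentence (realF (num x) A)"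
  using fvf_ref[of "num x" A] by (auto simp: sentence_def)

lemma not_sent_Eq: "\<not> sentence (Eq (Var 0) (Var 0))"
  by (simp add: sentence_def)

lemma Rsem_rs:
  fixes \<gamma> :: "'o::{countable,wellorder}"
  assumes "Orc = (\<lambda>d B. if d < \<gamma> then NR P d B else {})"
  shows "Rsem P (\<lambda>b. if b < \<gamma> then FFset P \<gamma> b else {}) (\<lambda>_. 0) A
       = rs P Orc A"
  using assms
proof (induction P Orc A rule: rs.induct)
  case (6 P Orc A)
  show ?case
  proof -
    have "Rsem P (\<lambda>b. if b < \<gamma> then FFset P \<gamma> b else {}) (shift k (\<lambda>_. 0)) A
       = rs P Orc (inst A (num k))" for k
      using 6(1)[of "pair k 0"] 6(2) by (simp add: inst_def Rsem_substf ins0)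
    then show ?thesis by simp
  qed
next
  case (3 P Orc b t u)
  note O = 3
  show ?case
  proof (cases "b < \<gamma>")
    case False then show ?thesis using O by simp
  next
    case True
    { fix n
      let ?x = "teval t (\<lambda>_. 0)" and ?y = "teval u (\<lambda>_. 0)"
      have "(n, dotref TYPE('o) ?x ?y) \<in> FFset P \<gamma> b \<longleftrightarrow>
            (\<exists>A. sent_lt b A \<and> ?y = code A \<and> n \<in> NR P b (refF (num ?x) A))"
      proof
        assume "(n, dotref TYPE('o) ?x ?y) \<in> FFset P \<gamma> b"
        then obtain B where B: "sent_lt b B" "code B = dotref TYPE('o) ?x ?y" "n \<in> refset P \<gamma> B"
          by (auto simp: FFset_def)
        show "\<exists>A. sent_lt b A \<and> ?y = code A \<and> n \<in> NR P b (refF (num ?x) A)"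
        proof (cases "\<exists>A::'o fm. sentence A \<and> code A = ?y")
          case True
          then obtain A :: "'o fm" where A: "sentence A" "code A = ?y" by blast
          then have "B = refF (num ?x) A" using B(2) dotref_code[of A ?x] by (simp add: code_inj)
          then show ?thesis using A B \<open>b < \<gamma>\<close> NR_persist[of B b \<gamma> P]
            by (auto simp: sent_lt_def ords_ref refset_def)
        next
          case False
          then have "dotref TYPE('o) ?x ?y = code (Eq (Var 0) (Var 0) :: 'o fm)"
            unfolding dotref_def by (rule if_not_P)
          then have "B = Eq (Var 0) (Var 0)" using B(2) by (simp add: code_inj)
          then show ?thesis using B(1) by (simp add: sent_lt_def sentence_def)
        qed
      next
        assume "\<exists>A. sent_lt b A \<and> ?y = code A \<and> n \<in> NR P b (refF (num ?x) A)"
        then obtain A where A: "sent_lt b A" "?y = code A" "n \<in> NR P b (refF (num ?x) A)" by blast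
        then have "sent_lt b (refF (num ?x) A)"
          using sentence_ref by (auto simp: sent_lt_def ords_ref)
        moreover have "n \<in> refset P \<gamma> (refF (num ?x) A)"
          using A NR_persist[of "refF (num ?x) A" b \<gamma> P] True
          by (auto simp: refset_def sent_lt_def ords_ref)
        ultimately show "(n, dotref TYPE('o) ?x ?y) \<in> FFset P \<gamma> b"
          using A dotref_code[of A ?x] by (auto simp: FFset_def sent_lt_def)
      qed }
    then show ?thesis using True O by simp
  qed
next
  case (4 P Orc b t u)
  note O = 4
  show ?case
  proof (cases "b < \<gamma>")
    case False then show ?thesis using O by simp
  next
    case True
    { fix n
      let ?x = "teval t (\<lambda>_. 0)" and ?y = "teval u (\<lambda>_. 0)"
      have "(n, dotreal TYPE('o) ?x ?y) \<in> FFset P \<gamma> b \<longleftrightarrow>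
            (\<exists>A. sent_lt b A \<and> ?y = code A \<and> n \<in> NR P b (realF (num ?x) A))"
      proof
        assume "(n, dotreal TYPE('o) ?x ?y) \<in> FFset P \<gamma> b"
        then obtain B where B: "sent_lt b B" "code B = dotreal TYPE('o) ?x ?y" "n \<in> refset P \<gamma> B"
          by (auto simp: FFset_def)
        show "\<exists>A. sent_lt b A \<and> ?y = code A \<and> n \<in> NR P b (realF (num ?x) A)"
        proof (cases "\<exists>A::'o fm. sentence A \<and> code A = ?y")
          case True
          then obtain A :: "'o fm" where A: "sentence A" "code A = ?y" by blast
          then have "B = realF (num ?x) A" using B(2) dotreal_code[of A ?x] by (simp add: code_inj)
          then show ?thesis using A B \<open>b < \<gamma>\<close> NR_persist[of B b \<gamma> P]
            by (auto simp: sent_lt_def ords_ref refset_def)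
        next
          case False
          then have "dotreal TYPE('o) ?x ?y = code (Eq (Var 0) (Var 0) :: 'o fm)"
            unfolding dotreal_def by (rule if_not_P)
          then have "B = Eq (Var 0) (Var 0)" using B(2) by (simp add: code_inj)
          then show ?thesis using B(1) by (simp add: sent_lt_def sentence_def)
        qed
      next
        assume "\<exists>A. sent_lt b A \<and> ?y = code A \<and> n \<in> NR P b (realF (num ?x) A)"
        then obtain A where A: "sent_lt b A" "?y = code A" "n \<in> NR P b (realF (num ?x) A)" by blast
        then have "sent_lt b (realF (num ?x) A)"
          using sentence_ref by (auto simp: sent_lt_def ords_ref)
        moreover have "n \<in> refset P \<gamma> (realF (num ?x) A)"
          using A NR_persist[of "realF (num ?x) A" b \<gamma> P] True
          by (auto simp: refset_def sent_lt_def ords_ref)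
        ultimately show "(n, dotreal TYPE('o) ?x ?y) \<in> FFset P \<gamma> b"
          using A dotreal_code[of A ?x] by (auto simp: FFset_def sent_lt_def)
      qed }
    then show ?thesis using True O by simp
  qed
qed auto

lemma NR_Rsem:
  fixes \<gamma> :: "'o::{countable,wellorder}"
  shows "NR P \<gamma> A = Rsem P (\<lambda>b. if b < \<gamma> then FFset P \<gamma> b else {}) (\<lambda>_. 0) A"
  by (simp add: Rsem_rs[OF refl] NR_unfold[of P \<gamma> A])

theorem lemma10:
  fixes P :: "nat set" and \<gamma> \<beta> :: "'o::{countable,wellorder}" and A :: "'o fm" and a :: nat
  assumes "is_pole P" and "\<beta> < \<gamma>" and "sent_lt \<beta> A"
  shows "(models P \<gamma> (Ff \<beta> (num a) (num (code A))) \<longleftrightarrow> models P \<gamma> (refF (num a) A))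
       \<and> (models P \<gamma> (Tf \<beta> (num a) (num (code A))) \<longleftrightarrow> models P \<gamma> (realF (num a) A))"
  using assms(2,3)
  by (simp only: models_def sat_ref teval_num)
     (auto simp: models_def sat_ref FFset_def TTset_def code_inj refset_def realset_def NR_Rsem)

end
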